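(* Let $A$ be a domain equipped with an ultrametric absolute value $|\cdot|$ and let $A_0$ be a dense subring of $A$ such that $A=A_0+gA$ for every nonzero $g\in A_0$. Put $E=\operatorname{Quot}(A)$, $E_0=\operatorname{Quot}(A_0)$, and let $E_1,E_2$ be subfields of $E$ with $E_0\subseteq E_2$. Let $n\in\mathbb{N}$ and suppose: (i) the localization $(A_0\setminus\{0\})^{-1}A$ equals $E$; (ii) for every $b\in\operatorname{Mat}_n(A)$ with $|b-\mathbb{1}|<1$ there exist $b_1\in\operatorname{GL}_n(E_1)$ and $b_2\in\operatorname{GL}_n(E_2)$ with $b=b_1b_2$. Then $\operatorname{GL}_n(E)=\operatorname{GL}_n(E_1)\cdot\operatorname{GL}_n(E_2)$.
   Context: For a matrix $(a_{ij})$ over $A$, $|(a_{ij})|=\max_{i,j}|a_{ij}|$; $\mathbb{1}$ denotes the $n\times n$ identity matrix. "Dense" refers to the topology induced by $|\cdot|$. *)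

theory Defs
  imports Main "Jordan_Normal_Form.Matrix"
begin

text \<open>The fraction field E is modelled as the ambient field type; subrings/subfields as subsets.\<close>

definition is_subring :: "'a::field set \<Rightarrow> bool" where
  "is_subring S \<longleftrightarrow> 0 \<in> S \<and> 1 \<in> S \<and>
     (\<forall>x\<in>S. \<forall>y\<in>S. x + y \<in> S \<and> x - y \<in> S \<and> x * y \<in> S)"

definition is_subfield :: "'a::field set \<Rightarrow> bool" where
  "is_subfield S \<longleftrightarrow> is_subring S \<and> (\<forall>x\<in>S. x \<noteq> 0 \<longrightarrow> inverse x \<in> S)"

definition Quot :: "'a::field set \<Rightarrow> 'a set" where
  "Quot S = {x / y | x y. x \<in> S \<and> y \<in> S \<and> y \<noteq> 0}"

definition ultrametric_abs_on :: "'a::field set \<Rightarrow> ('a \<Rightarrow> real) \<Rightarrow> bool" where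
  "ultrametric_abs_on A av \<longleftrightarrow>
     (\<forall>x\<in>A. av x \<ge> 0 \<and> (av x = 0 \<longleftrightarrow> x = 0)) \<and>
     (\<forall>x\<in>A. \<forall>y\<in>A. av (x * y) = av x * av y) \<and>
     (\<forall>x\<in>A. \<forall>y\<in>A. av (x + y) \<le> max (av x) (av y))"

definition dense_in :: "('a::field \<Rightarrow> real) \<Rightarrow> 'a set \<Rightarrow> 'a set \<Rightarrow> bool" where
  "dense_in av A0 A \<longleftrightarrow> (\<forall>x\<in>A. \<forall>\<epsilon>>0. \<exists>y\<in>A0. av (x - y) < \<epsilon>)"

definition Mat_over :: "nat \<Rightarrow> 'a::field set \<Rightarrow> 'a mat set" where
  "Mat_over n S = {M \<in> carrier_mat n n. elements_mat M \<subseteq> S}"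

definition GL_over :: "nat \<Rightarrow> 'a::field set \<Rightarrow> 'a mat set" where
  "GL_over n S = {M \<in> Mat_over n S. \<exists>N \<in> Mat_over n S. M * N = 1\<^sub>m n \<and> N * M = 1\<^sub>m n}"

text \<open>|M| = max of |M_ij|; for n = 0 the max over the empty set is taken as 0.\<close>
definition mat_abs_lt_1 :: "('a::field \<Rightarrow> real) \<Rightarrow> nat \<Rightarrow> 'a mat \<Rightarrow> bool" where
  "mat_abs_lt_1 av n M \<longleftrightarrow> (\<forall>i<n. \<forall>j<n. av ((M - 1\<^sub>m n) $$ (i, j)) < 1)"

end

theory Submission imports Defs "Jordan_Normal_Form.Determinant"
begin

lemma sr_sum: assumes "is_subring S" "\<And>i. i \<in> I \<Longrightarrow> f i \<in> S" shows "sum f I \<in> S"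
proof (cases "finite I")
  case True then show ?thesis using assms(2)
    by (induction I rule: finite_induct) (use assms(1) in \<open>auto simp: is_subring_def\<close>)
next
  case False then show ?thesis using assms(1) by (simp add: is_subring_def)
qed

lemma sr_prod: assumes "is_subring S" "\<And>i. i \<in> I \<Longrightarrow> f i \<in> S" shows "prod f I \<in> S"
proof (cases "finite I")
  case True then show ?thesis using assms(2)
    by (induction I rule: finite_induct) (use assms(1) in \<open>auto simp: is_subring_def\<close>)
next
  case False then show ?thesis using assms(1) by (simp add: is_subring_def)
qed

lemma sr_neg1: "is_subring S \<Longrightarrow> -1 \<in> S"
  unfolding is_subring_def by (metis diff_0)

lemma sr_pow: assumes "is_subring S" "x \<in> S" shows "x ^ k \<in> S"
  using sr_prod[OF assms(1), of "{..<k}" "\<lambda>_. x"] assms(2) by simp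

lemma sr_mult: "is_subring S \<Longrightarrow> x \<in> S \<Longrightarrow> y \<in> S \<Longrightarrow> x * y \<in> S"
  unfolding is_subring_def by auto

lemma det_in: assumes S: "is_subring S" and M: "M \<in> Mat_over n S" shows "det M \<in> S"
proof -
  have Mc: "M \<in> carrier_mat n n" and el: "\<And>i j. i < n \<Longrightarrow> j < n \<Longrightarrow> M $$ (i,j) \<in> S"
    using M unfolding Mat_over_def by auto
  show ?thesis unfolding det_def'[OF Mc]
  proof (rule sr_sum[OF S])
    fix p assume "p \<in> {p. p permutes {0..<n}}"
    hence p: "p permutes {0..<n}" by simp
    have "signof p \<in> S" using S sr_neg1[OF S] unfolding sign_def is_subring_def by auto
    moreover have "(\<Prod>i = 0..<n. M $$ (i, p i)) \<in> S"
      by (rule sr_prod[OF S]) (use p el permutes_in_image in auto)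
    ultimately show "signof p * (\<Prod>i = 0..<n. M $$ (i, p i)) \<in> S" by (rule sr_mult[OF S])
  qed
qed

lemma adj_in: assumes S: "is_subring S" and M: "M \<in> Mat_over n S" shows "adj_mat M \<in> Mat_over n S"
proof -
  have Mc: "M \<in> carrier_mat n n" and el: "\<And>i j. i < n \<Longrightarrow> j < n \<Longrightarrow> M $$ (i,j) \<in> S"
    using M unfolding Mat_over_def by auto
  have "\<And>i j. i < n \<Longrightarrow> j < n \<Longrightarrow> cofactor M j i \<in> S"
  proof -
    fix i j assume ij: "i < n" "j < n"
    have "mat_delete M j i \<in> Mat_over (n-1) S"
      unfolding Mat_over_def using mat_delete_carrier[OF Mc] Mc el
      by (auto simp: mat_delete_def elim!: elements_matD[elim_format])
    then show "cofactor M j i \<in> S" unfolding cofactor_def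
      by (intro sr_mult[OF S] sr_pow[OF S] sr_neg1[OF S] det_in[OF S])
  qed
  then show ?thesis using adj_mat(1)[OF Mc] Mc unfolding Mat_over_def
    by (auto simp: adj_mat_def elim!: elements_matD[elim_format])
qed

lemma mult_in: assumes S: "is_subring S" and M: "M \<in> Mat_over n S" and N: "N \<in> Mat_over n S"
  shows "M * N \<in> Mat_over n S"
proof -
  have Mc: "M \<in> carrier_mat n n" and el: "\<And>i j. i < n \<Longrightarrow> j < n \<Longrightarrow> M $$ (i,j) \<in> S"
    using M unfolding Mat_over_def by auto
  have Nc: "N \<in> carrier_mat n n" and el2: "\<And>i j. i < n \<Longrightarrow> j < n \<Longrightarrow> N $$ (i,j) \<in> S"
    using N unfolding Mat_over_def by auto
  have "\<And>i j. i < n \<Longrightarrow> j < n \<Longrightarrow> (M * N) $$ (i,j) \<in> S"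
    using Mc Nc by (auto simp: scalar_prod_def intro!: sr_sum[OF S] sr_mult[OF S] el el2)
  then show ?thesis using Mc Nc unfolding Mat_over_def
    by (auto elim!: elements_matD[elim_format])
qed

lemma GL_mult: assumes S: "is_subring S" and M: "M \<in> GL_over n S" and N: "N \<in> GL_over n S"
  shows "M * N \<in> GL_over n S"
proof -
  obtain M' where M': "M' \<in> Mat_over n S" "M * M' = 1\<^sub>m n" "M' * M = 1\<^sub>m n" using M unfolding GL_over_def by auto
  obtain N' where N': "N' \<in> Mat_over n S" "N * N' = 1\<^sub>m n" "N' * N = 1\<^sub>m n" using N unfolding GL_over_def by auto
  have c: "M \<in> carrier_mat n n" "N \<in> carrier_mat n n" "M' \<in> carrier_mat n n" "N' \<in> carrier_mat n n"
    using M N M' N' unfolding GL_over_def Mat_over_def by auto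
  have "M * N * (N' * M') = M * (N * N') * M'" using c by (simp add: assoc_mult_mat[of _ n n _ n _ n])
  also have "\<dots> = 1\<^sub>m n" using c N' M' by simp
  finally have 1: "M * N * (N' * M') = 1\<^sub>m n" .
  have "N' * M' * (M * N) = N' * (M' * M) * N" using c by (simp add: assoc_mult_mat[of _ n n _ n _ n])
  also have "\<dots> = 1\<^sub>m n" using c N' M' by simp
  finally have 2: "N' * M' * (M * N) = 1\<^sub>m n" .
  show ?thesis unfolding GL_over_def using 1 2 mult_in[OF S] M N M' N' unfolding GL_over_def
    by blast
qed

lemma GL_of_det: assumes S: "is_subfield S" and M: "M \<in> Mat_over n S" and d: "det M \<noteq> 0"
  shows "M \<in> GL_over n S"
proof -
  have S': "is_subring S" using S unfolding is_subfield_def by auto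
  have Mc: "M \<in> carrier_mat n n" using M unfolding Mat_over_def by auto
  let ?N = "inverse (det M) \<cdot>\<^sub>m adj_mat M"
  have "inverse (det M) \<in> S" using S det_in[OF S' M] d unfolding is_subfield_def by auto
  hence "?N \<in> Mat_over n S" using adj_in[OF S' M] adj_mat(1)[OF Mc] unfolding Mat_over_def
    by (auto intro!: sr_mult[OF S'] elements_matI elim!: elements_matD[elim_format])
  moreover have "M * ?N = 1\<^sub>m n" using adj_mat[OF Mc] d Mc
    by (simp add: mult_smult_distrib[of _ n n _ n]) (rule eq_matI, auto)
  moreover have "?N * M = 1\<^sub>m n" using adj_mat[OF Mc] d Mc
    by (simp add: mult_smult_assoc_mat[of _ n n _ n]) (rule eq_matI, auto)
  ultimately show ?thesis using M unfolding GL_over_def by blast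
qed

lemma GL_mono: "S \<subseteq> T \<Longrightarrow> GL_over n S \<subseteq> GL_over n T"
  unfolding GL_over_def Mat_over_def by blast

lemma av_basic: assumes U: "ultrametric_abs_on A av" and S: "is_subring A" and x: "x \<in> A"
  shows "av (- x) = av x" "av 0 = 0" "av x \<ge> 0"
proof -
  have m1: "-1 \<in> A" using sr_neg1[OF S] .
  have one: "1 \<in> A" using S unfolding is_subring_def by auto
  have mul: "\<And>x y. x \<in> A \<Longrightarrow> y \<in> A \<Longrightarrow> av (x * y) = av x * av y" using U unfolding ultrametric_abs_on_def by blast
  have "av 1 = av 1 * av 1" using mul[OF one one] by simp
  moreover have "av 1 \<noteq> 0" using U one unfolding ultrametric_abs_on_def by auto
  ultimately have a1: "av 1 = 1" by simp
  have "av (-1) * av (-1) = 1" using mul[OF m1 m1] a1 by simp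
  moreover have "av (-1) \<ge> 0" using U m1 unfolding ultrametric_abs_on_def by auto
  ultimately have "av (-1) = 1" by (metis power2_eq_iff_nonneg power2_eq_square zero_le_one one_power2)
  then show "av (- x) = av x" using mul[OF m1 x] by simp
  show "av 0 = 0" using U S unfolding ultrametric_abs_on_def is_subring_def by auto
  show "av x \<ge> 0" using U x unfolding ultrametric_abs_on_def by auto
qed

lemma av_sum: assumes U: "ultrametric_abs_on A av" and S: "is_subring A" and I: "finite I"
  and f: "\<And>i. i \<in> I \<Longrightarrow> f i \<in> A \<and> av (f i) < 1"
  shows "av (sum f I) < 1"
  using I f
proof (induction I rule: finite_induct)
  case empty then show ?case using av_basic(2)[OF U S, of 0] S by (simp add: is_subring_def)
next
  case (insert x F)
  have "sum f F \<in> A" using insert by (intro sr_sum[OF S]) auto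
  then have m: "av (f x + sum f F) \<le> max (av (f x)) (av (sum f F))"
    using U insert unfolding ultrametric_abs_on_def by auto
  have a: "av (f x) < 1" using insert.prems by auto
  have b: "av (sum f F) < 1" using insert by auto
  from m a b have "av (f x + sum f F) < 1" by linarith
  then show ?case using insert by simp
qed

lemma common_denom: assumes S0: "is_subring A0" and sub: "A0 \<subseteq> A" and S: "is_subring A"
  and F: "finite F" and h: "\<And>x. x \<in> F \<Longrightarrow> \<exists>a g. a \<in> A \<and> g \<in> A0 \<and> g \<noteq> 0 \<and> x = a / g"
  shows "\<exists>k \<in> A0. k \<noteq> 0 \<and> (\<forall>x\<in>F. k * x \<in> A)"
  using F h
proof (induction F rule: finite_induct)
  case empty then show ?case using S0 by (intro bexI[of _ 1]) (auto simp: is_subring_def)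
next
  case (insert x F)
  then obtain k where k: "k \<in> A0" "k \<noteq> 0" "\<forall>y\<in>F. k * y \<in> A" by auto
  obtain a g where ag: "a \<in> A" "g \<in> A0" "g \<noteq> 0" "x = a / g" using insert by blast
  have "k * g \<in> A0" using k ag S0 by (simp add: sr_mult)
  moreover have "\<forall>y\<in>insert x F. (k*g) * y \<in> A"
  proof
    fix y assume "y \<in> insert x F"
    then show "(k*g) * y \<in> A"
    proof
      assume "y = x"
      have "g * x = a" using ag(3,4) by simp
      then have e: "(k*g)*y = k * a" using \<open>y = x\<close> by (simp add: mult.assoc)
      have "k * a \<in> A" using sr_mult[OF S] k(1) ag(1) sub by auto
      then show ?thesis unfolding e .
    next
      assume "y \<in> F" then have e: "(k*g)*y = g * (k*y)" by simp
      have "g * (k*y) \<in> A" using k ag sub \<open>y \<in> F\<close> by (auto intro: sr_mult[OF S])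
      then show ?thesis unfolding e .
    qed
  qed
  moreover have "k * g \<noteq> 0" using k ag by simp
  ultimately show ?case by blast
qed

lemma main_incl:
  fixes A A0 E1 E2 :: "'a::field set" and av :: "'a \<Rightarrow> real" and n :: nat
  assumes SA: "is_subring A"
    and U: "ultrametric_abs_on A av"
    and S0: "is_subring A0" and sub: "A0 \<subseteq> A" and dense: "dense_in av A0 A"
    and split: "\<forall>g\<in>A0. g \<noteq> 0 \<longrightarrow> A = {a0 + g * a | a0 a. a0 \<in> A0 \<and> a \<in> A}"
    and F2: "is_subfield E2" and Q: "Quot A0 \<subseteq> E2"
    and loc: "{a / g | a g. a \<in> A \<and> g \<in> A0 \<and> g \<noteq> 0} = UNIV"
    and hyp: "\<forall>b\<in>Mat_over n A. mat_abs_lt_1 av n b \<longrightarrow>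
           (\<exists>b1\<in>GL_over n E1. \<exists>b2\<in>GL_over n E2. b = b1 * b2)"
    and b: "b \<in> GL_over n UNIV"
  shows "\<exists>b1 b2. b = b1 * b2 \<and> b1 \<in> GL_over n E1 \<and> b2 \<in> GL_over n E2"
proof -
  have S2: "is_subring E2" using F2 unfolding is_subfield_def by auto
  obtain bi where bc: "b \<in> carrier_mat n n" and bic: "bi \<in> carrier_mat n n"
    and bbi: "b * bi = 1\<^sub>m n" and bib: "bi * b = 1\<^sub>m n"
    using b unfolding GL_over_def Mat_over_def by auto
  have "finite (elements_mat b \<union> elements_mat bi)" by (simp add: elements_mat_def)
  moreover have "\<And>x. \<exists>a g. a \<in> A \<and> g \<in> A0 \<and> g \<noteq> 0 \<and> x = a / g"
  proof -
    fix x :: 'a have "x \<in> {a / g | a g. a \<in> A \<and> g \<in> A0 \<and> g \<noteq> 0}" using loc by simp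
    then show "\<exists>a g. a \<in> A \<and> g \<in> A0 \<and> g \<noteq> 0 \<and> x = a / g" by blast
  qed
  ultimately obtain k where k: "k \<in> A0" "k \<noteq> 0" and kF: "\<forall>x\<in>elements_mat b \<union> elements_mat bi. k * x \<in> A"
    using common_denom[OF S0 sub SA] by meson
  have kb: "\<And>i j. i < n \<Longrightarrow> j < n \<Longrightarrow> k * b $$ (i,j) \<in> A"
    using kF bc by (auto intro!: elements_matI)
  have kbi: "\<And>i j. i < n \<Longrightarrow> j < n \<Longrightarrow> k * bi $$ (i,j) \<in> A"
    using kF bic by (auto intro!: elements_matI)
  define K where "K = k * k"
  have K: "K \<in> A0" "K \<noteq> 0" using k S0 by (auto simp: K_def intro: sr_mult)
  have "\<forall>x\<in>A. \<exists>p. fst p \<in> A0 \<and> snd p \<in> A \<and> x = fst p + K * snd p"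
  proof
    fix x assume "x \<in> A"
    then have "x \<in> {a0 + K * a | a0 a. a0 \<in> A0 \<and> a \<in> A}" using split K by blast
    then obtain a0 a where "a0 \<in> A0" "a \<in> A" "x = a0 + K * a" by blast
    then show "\<exists>p. fst p \<in> A0 \<and> snd p \<in> A \<and> x = fst p + K * snd p" by (intro exI[of _ "(a0,a)"]) auto
  qed
  then obtain f where f: "\<And>x. x \<in> A \<Longrightarrow> fst (f x) \<in> A0 \<and> snd (f x) \<in> A \<and> x = fst (f x) + K * snd (f x)"
    by metis
  define D where "D = (\<lambda>i l. k * b $$ (i,l))"
  define M where "M = 1 + (\<Sum>i<n. \<Sum>l<n. av (D i l))"
  have Dnn: "\<And>i l. i < n \<Longrightarrow> l < n \<Longrightarrow> av (D i l) \<ge> 0"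
    using av_basic(3)[OF U SA] kb unfolding D_def by auto
  have DM: "\<And>i l. i < n \<Longrightarrow> l < n \<Longrightarrow> av (D i l) \<le> M - 1"
  proof -
    fix i l assume il: "i < n" "l < n"
    have "av (D i l) \<le> (\<Sum>l<n. av (D i l))"
      by (rule member_le_sum) (use il Dnn in auto)
    also have "\<dots> \<le> (\<Sum>i<n. \<Sum>l<n. av (D i l))"
      by (rule member_le_sum[where f = "\<lambda>i. \<Sum>l<n. av (D i l)"]) (use il Dnn in \<open>auto intro: sum_nonneg\<close>)
    finally show "av (D i l) \<le> M - 1" unfolding M_def by simp
  qed
  have M1: "M \<ge> 1" unfolding M_def using Dnn by (auto intro!: sum_nonneg)
  have "\<forall>x\<in>A. \<exists>y\<in>A0. av (x - y) < 1 / M" using dense M1 unfolding dense_in_def by auto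
  then obtain p where p: "\<And>x. x \<in> A \<Longrightarrow> p x \<in> A0 \<and> av (x - p x) < 1 / M" by metis
  define a where "a = (\<lambda>i j. k * bi $$ (i,j))"
  define R where "R = (\<lambda>i j. snd (f (a i j)))"
  define A' where "A' = (\<lambda>i j. fst (f (a i j)))"
  define s where "s = (\<lambda>i j. R i j - p (R i j))"
  have aA: "\<And>i j. i < n \<Longrightarrow> j < n \<Longrightarrow> a i j \<in> A" using kbi unfolding a_def by auto
  have RA: "\<And>i j. i < n \<Longrightarrow> j < n \<Longrightarrow> R i j \<in> A" using f aA unfolding R_def by auto
  have A'A0: "\<And>i j. i < n \<Longrightarrow> j < n \<Longrightarrow> A' i j \<in> A0" using f aA unfolding A'_def by auto
  have aeq: "\<And>i j. i < n \<Longrightarrow> j < n \<Longrightarrow> a i j = A' i j + K * R i j"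
    using f aA unfolding A'_def R_def by auto
  have pR: "\<And>i j. i < n \<Longrightarrow> j < n \<Longrightarrow> p (R i j) \<in> A0 \<and> av (s i j) < 1 / M"
    using p RA unfolding s_def by auto
  have sA: "\<And>i j. i < n \<Longrightarrow> j < n \<Longrightarrow> s i j \<in> A"
    using pR RA sub SA unfolding s_def is_subring_def by (meson subsetD)
  define c where "c = mat n n (\<lambda>(i,j). (A' i j + K * p (R i j)) / k)"
  have cc: "c \<in> carrier_mat n n" unfolding c_def by simp
  have centry: "\<And>i j. i < n \<Longrightarrow> j < n \<Longrightarrow> c $$ (i,j) = bi $$ (i,j) - k * s i j"
  proof -
    fix i j assume ij: "i < n" "j < n"
    have "c $$ (i,j) = (A' i j + K * p (R i j)) / k" unfolding c_def using ij by simp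
    also have "\<dots> = (a i j - K * s i j) / k" using aeq[OF ij] unfolding s_def by (simp add: algebra_simps)
    also have "\<dots> = bi $$ (i,j) - k * s i j" using k(2) unfolding a_def K_def by (simp add: field_simps)
    finally show "c $$ (i,j) = bi $$ (i,j) - k * s i j" .
  qed
  define Er where "Er = (\<lambda>i j. \<Sum>l<n. D i l * s l j)"
  have bcentry: "\<And>i j. i < n \<Longrightarrow> j < n \<Longrightarrow> (b * c) $$ (i,j) = (if i = j then 1 else 0) - Er i j"
  proof -
    fix i j assume ij: "i < n" "j < n"
    have "(b * c) $$ (i,j) = (\<Sum>l<n. b $$ (i,l) * c $$ (l,j))"
      using bc cc ij by (simp add: scalar_prod_def atLeast0LessThan)
    also have "\<dots> = (\<Sum>l<n. b $$ (i,l) * bi $$ (l,j) - D i l * s l j)"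
    proof (rule sum.cong)
      fix l assume "l \<in> {..<n}"
      then have h: "c $$ (l,j) = bi $$ (l,j) - k * s l j" using centry ij by simp
      show "b $$ (i,l) * c $$ (l,j) = b $$ (i,l) * bi $$ (l,j) - D i l * s l j"
        unfolding D_def h by (simp add: algebra_simps)
    qed simp
    also have "\<dots> = (\<Sum>l<n. b $$ (i,l) * bi $$ (l,j)) - Er i j"
      unfolding Er_def by (simp add: sum_subtractf)
    also have "(\<Sum>l<n. b $$ (i,l) * bi $$ (l,j)) = (b * bi) $$ (i,j)"
      using bc bic ij by (simp add: scalar_prod_def atLeast0LessThan)
    also have "\<dots> = (if i = j then 1 else 0)" using bbi ij by simp
    finally show "(b * c) $$ (i,j) = (if i = j then 1 else 0) - Er i j" .
  qed
  have ErA: "\<And>i j. i < n \<Longrightarrow> j < n \<Longrightarrow> Er i j \<in> A \<and> av (Er i j) < 1"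
  proof -
    fix i j assume ij: "i < n" "j < n"
    have t: "\<And>l. l \<in> {..<n} \<Longrightarrow> D i l * s l j \<in> A \<and> av (D i l * s l j) < 1"
    proof -
      fix l assume "l \<in> {..<n}" then have l: "l < n" by simp
      have DA: "D i l \<in> A" using kb ij l unfolding D_def by auto
      have e: "av (D i l * s l j) = av (D i l) * av (s l j)"
        using U DA sA[OF l ij(2)] unfolding ultrametric_abs_on_def by auto
      have s1: "av (s l j) < 1 / M" "av (s l j) \<ge> 0" using pR[OF l ij(2)] av_basic(3)[OF U SA sA[OF l ij(2)]] by auto
      have d1: "av (D i l) \<le> M - 1" "av (D i l) \<ge> 0" using DM[OF ij(1) l] Dnn[OF ij(1) l] by auto
      have "av (D i l) * av (s l j) \<le> (M - 1) * (1 / M)"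
        using s1 d1 by (intro mult_mono) auto
      also have "\<dots> < 1" using M1 by (simp add: field_simps)
      finally show "D i l * s l j \<in> A \<and> av (D i l * s l j) < 1"
        using e DA sA[OF l ij(2)] sr_mult[OF SA] by auto
    qed
    show "Er i j \<in> A \<and> av (Er i j) < 1" unfolding Er_def
      using av_sum[OF U SA, of "{..<n}" "\<lambda>l. D i l * s l j"] sr_sum[OF SA, of "{..<n}"] t by auto
  qed
  have bcM: "b * c \<in> Mat_over n A"
  proof -
    have "\<And>i j. i < n \<Longrightarrow> j < n \<Longrightarrow> (b * c) $$ (i,j) \<in> A"
      using bcentry ErA SA unfolding is_subring_def by auto
    then show ?thesis using bc cc unfolding Mat_over_def by (auto elim!: elements_matD[elim_format])
  qed
  have "mat_abs_lt_1 av n (b * c)"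
    unfolding mat_abs_lt_1_def
  proof (intro allI impI)
    fix i j assume ij: "i < n" "j < n"
    have "(b * c - 1\<^sub>m n) $$ (i,j) = - Er i j" using bcentry[OF ij] bc cc ij by simp
    then show "av ((b * c - 1\<^sub>m n) $$ (i,j)) < 1" using ErA[OF ij] av_basic(1)[OF U SA] by simp
  qed
  then obtain b1 b2 where b1: "b1 \<in> GL_over n E1" and b2: "b2 \<in> GL_over n E2" and e: "b * c = b1 * b2"
    using hyp bcM by blast
  have detne: "\<And>S X. X \<in> GL_over n S \<Longrightarrow> det X \<noteq> 0"
  proof -
    fix S X assume "X \<in> GL_over n S"
    then obtain Y where "X \<in> carrier_mat n n" "Y \<in> carrier_mat n n" "X * Y = 1\<^sub>m n"
      unfolding GL_over_def Mat_over_def by auto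
    then have "det X * det Y = 1" using det_mult[of X n Y] by simp
    then show "det X \<noteq> 0" by auto
  qed
  have b1c: "b1 \<in> carrier_mat n n" "b2 \<in> carrier_mat n n" using b1 b2 unfolding GL_over_def Mat_over_def by auto
  have "det b * det c = det b1 * det b2" using det_mult[OF bc cc] det_mult[OF b1c] e by simp
  then have dc: "det c \<noteq> 0" using detne[OF b1] detne[OF b2] by auto
  have cM: "c \<in> Mat_over n E2"
  proof -
    have "\<And>i j. i < n \<Longrightarrow> j < n \<Longrightarrow> c $$ (i,j) \<in> E2"
    proof -
      fix i j assume ij: "i < n" "j < n"
      have "A' i j + K * p (R i j) \<in> A0" using A'A0[OF ij] pR[OF ij] K S0 unfolding is_subring_def by auto
      then have "c $$ (i,j) \<in> Quot A0" unfolding Quot_def c_def using ij k by auto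
      then show "c $$ (i,j) \<in> E2" using Q by auto
    qed
    then show ?thesis using cc unfolding Mat_over_def by (auto elim!: elements_matD[elim_format])
  qed
  obtain ci where ci: "ci \<in> Mat_over n E2" "c * ci = 1\<^sub>m n" "ci * c = 1\<^sub>m n"
    using GL_of_det[OF F2 cM dc] unfolding GL_over_def by auto
  have ciG: "ci \<in> GL_over n E2" using ci cM unfolding GL_over_def by auto
  have cic: "ci \<in> carrier_mat n n" using ci unfolding Mat_over_def by auto
  have "b = b * (c * ci)" using ci bc by simp
  also have "\<dots> = (b * c) * ci" using bc cc cic by (simp add: assoc_mult_mat[of _ n n _ n _ n])
  also have "\<dots> = b1 * (b2 * ci)" using e b1c cic by (simp add: assoc_mult_mat[of _ n n _ n _ n])
  finally show ?thesis using b1 GL_mult[OF S2 b2 ciG] by blast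
qed

theorem proposition3p2:
  fixes A A0 E1 E2 :: "'a::field set" and av :: "'a \<Rightarrow> real" and n :: nat
  assumes "is_subring A" and "Quot A = UNIV"
    and "ultrametric_abs_on A av"
    and "is_subring A0" and "A0 \<subseteq> A" and "dense_in av A0 A"
    and "\<forall>g\<in>A0. g \<noteq> 0 \<longrightarrow> A = {a0 + g * a | a0 a. a0 \<in> A0 \<and> a \<in> A}"
    and "is_subfield E1" and "is_subfield E2" and "Quot A0 \<subseteq> E2"
    and "{a / g | a g. a \<in> A \<and> g \<in> A0 \<and> g \<noteq> 0} = UNIV"
    and "\<forall>b\<in>Mat_over n A. mat_abs_lt_1 av n b \<longrightarrow>
           (\<exists>b1\<in>GL_over n E1. \<exists>b2\<in>GL_over n E2. b = b1 * b2)"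
  shows "GL_over n UNIV = {b1 * b2 | b1 b2. b1 \<in> GL_over n E1 \<and> b2 \<in> GL_over n E2}"
proof
  show "GL_over n UNIV \<subseteq> {b1 * b2 | b1 b2. b1 \<in> GL_over n E1 \<and> b2 \<in> GL_over n E2}"
  proof
    fix b assume "b \<in> GL_over n (UNIV :: 'a set)"
    then show "b \<in> {b1 * b2 | b1 b2. b1 \<in> GL_over n E1 \<and> b2 \<in> GL_over n E2}"
      using main_incl[OF assms(1,3,4,5,6,7,9,10,11,12)] by blast
  qed
next
  have U: "is_subring (UNIV :: 'a set)" unfolding is_subring_def by simp
  show "{b1 * b2 | b1 b2. b1 \<in> GL_over n E1 \<and> b2 \<in> GL_over n E2} \<subseteq> GL_over n UNIV"
    using GL_mult[OF U] GL_mono[of E1 UNIV n] GL_mono[of E2 UNIV n] by blast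
qed

end
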